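(* Let $k$ be a field, $\Gamma=(V,E)$ a finite connected quiver, $I\subseteq R^2$ a two-sided ideal of $k\Gamma$, and let $q$ be a path with $h(q)=t(q)=v_0$. Then $$D_{\overline{q}}=\sum_{p\in E,\ t(p)=v_0}D_{p,\overline{qp}}-\sum_{r\in E,\ h(r)=v_0}D_{r,\overline{rq}}.$$
   Context: For a path $p$, $t(p),h(p)$ are its start and end vertex; paths multiply by left-to-right concatenation (product $0$ if they do not concatenate). $R$ is the ideal generated by $E$ and $\overline{x}=x+I$. A differential operator from $k\Gamma$ to $k\Gamma/I$ is a $k$-linear map $D$ with $D(xy)=D(x)\overline{y}+\overline{x}D(y)$. For $m\in k\Gamma/I$, $D_m$ denotes the differential operator $x\mapsto m\overline{x}-\overline{x}m$. For an arrow $r$ and a path $s$ with the same start and end vertices as $r$, $D_{r,\overline{s}}$ is the unique differential operator $k\Gamma\to k\Gamma/I$ with $D_{r,\overline{s}}(r)=\overline{s}$ and vanishing on all other arrows and all vertices. *)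

theory Defs
  imports Main
begin

text \<open>Quiver Gamma = (V, E) with start map t and end map h on arrows.
  A path is a pair (v, es): start vertex v and a (possibly empty) list of arrows,
  composed left to right. (v, []) is the trivial path at v.
  Elements of k Gamma / I are represented by representatives in k Gamma; equality in the
  quotient is congruence modulo I.\<close>

type_synonym ('v, 'e) qpath = "'v \<times> 'e list"
type_synonym ('v, 'e, 'k) pelt = "('v, 'e) qpath \<Rightarrow> 'k"

definition is_qpath :: "'v set \<Rightarrow> 'e set \<Rightarrow> ('e \<Rightarrow> 'v) \<Rightarrow> ('e \<Rightarrow> 'v) \<Rightarrow> ('v, 'e) qpath \<Rightarrow> bool" where
  "is_qpath V E t h p \<longleftrightarrow> fst p \<in> V \<and> set (snd p) \<subseteq> E \<and>
     (snd p \<noteq> [] \<longrightarrow> t (hd (snd p)) = fst p) \<and>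
     (\<forall>i. Suc i < length (snd p) \<longrightarrow> h (snd p ! i) = t (snd p ! Suc i))"

definition pend :: "('e \<Rightarrow> 'v) \<Rightarrow> ('v, 'e) qpath \<Rightarrow> 'v" where
  "pend h p = (if snd p = [] then fst p else h (last (snd p)))"

definition pcat :: "('v, 'e) qpath \<Rightarrow> ('v, 'e) qpath \<Rightarrow> ('v, 'e) qpath" where
  "pcat p q = (fst p, snd p @ snd q)"

definition path_alg :: "'v set \<Rightarrow> 'e set \<Rightarrow> ('e \<Rightarrow> 'v) \<Rightarrow> ('e \<Rightarrow> 'v) \<Rightarrow> ('v, 'e, 'k::zero) pelt set" where
  "path_alg V E t h = {x. finite {p. x p \<noteq> 0} \<and> (\<forall>p. x p \<noteq> 0 \<longrightarrow> is_qpath V E t h p)}"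

definition bas :: "('v, 'e) qpath \<Rightarrow> ('v, 'e, 'k::{zero,one}) pelt" where
  "bas p = (\<lambda>q. if q = p then 1 else 0)"

definition smul :: "'k::times \<Rightarrow> ('v, 'e, 'k) pelt \<Rightarrow> ('v, 'e, 'k) pelt" where
  "smul c x = (\<lambda>p. c * x p)"

definition pmult :: "('e \<Rightarrow> 'v) \<Rightarrow> ('v, 'e, 'k::comm_ring_1) pelt \<Rightarrow> ('v, 'e, 'k) pelt \<Rightarrow> ('v, 'e, 'k) pelt" where
  "pmult h x y = (\<lambda>p. \<Sum>i\<in>{0..length (snd p)}.
      x (fst p, take i (snd p)) * y (pend h (fst p, take i (snd p)), drop i (snd p)))"

definition is_ideal :: "'v set \<Rightarrow> 'e set \<Rightarrow> ('e \<Rightarrow> 'v) \<Rightarrow> ('e \<Rightarrow> 'v) \<Rightarrow> ('v, 'e, 'k::comm_ring_1) pelt set \<Rightarrow> bool" where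
  "is_ideal V E t h J \<longleftrightarrow> J \<subseteq> path_alg V E t h \<and> (\<lambda>_. 0) \<in> J \<and>
     (\<forall>x\<in>J. \<forall>y\<in>J. (\<lambda>p. x p + y p) \<in> J) \<and>
     (\<forall>c x. x \<in> J \<longrightarrow> smul c x \<in> J) \<and>
     (\<forall>a\<in>path_alg V E t h. \<forall>x\<in>J. pmult h a x \<in> J \<and> pmult h x a \<in> J)"

definition ideal_gen :: "'v set \<Rightarrow> 'e set \<Rightarrow> ('e \<Rightarrow> 'v) \<Rightarrow> ('e \<Rightarrow> 'v) \<Rightarrow> ('v, 'e, 'k::comm_ring_1) pelt set \<Rightarrow> ('v, 'e, 'k) pelt set" where
  "ideal_gen V E t h S = \<Inter>{J. is_ideal V E t h J \<and> S \<subseteq> J}"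

definition arrow_ideal :: "'v set \<Rightarrow> 'e set \<Rightarrow> ('e \<Rightarrow> 'v) \<Rightarrow> ('e \<Rightarrow> 'v) \<Rightarrow> ('v, 'e, 'k::comm_ring_1) pelt set" where
  "arrow_ideal V E t h = ideal_gen V E t h {bas (t a, [a]) | a. a \<in> E}"

definition arrow_ideal_sq :: "'v set \<Rightarrow> 'e set \<Rightarrow> ('e \<Rightarrow> 'v) \<Rightarrow> ('e \<Rightarrow> 'v) \<Rightarrow> ('v, 'e, 'k::comm_ring_1) pelt set" where
  "arrow_ideal_sq V E t h = ideal_gen V E t h
     {pmult h x y | x y. x \<in> arrow_ideal V E t h \<and> y \<in> arrow_ideal V E t h}"

definition congI :: "('v, 'e, 'k::ab_group_add) pelt set \<Rightarrow> ('v, 'e, 'k) pelt \<Rightarrow> ('v, 'e, 'k) pelt \<Rightarrow> bool" where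
  "congI I x y \<longleftrightarrow> (\<lambda>p. x p - y p) \<in> I"

definition is_diffop :: "'v set \<Rightarrow> 'e set \<Rightarrow> ('e \<Rightarrow> 'v) \<Rightarrow> ('e \<Rightarrow> 'v) \<Rightarrow> ('v, 'e, 'k::comm_ring_1) pelt set
     \<Rightarrow> (('v, 'e, 'k) pelt \<Rightarrow> ('v, 'e, 'k) pelt) \<Rightarrow> bool" where
  "is_diffop V E t h I D \<longleftrightarrow>
     (\<forall>x\<in>path_alg V E t h. D x \<in> path_alg V E t h) \<and>
     (\<forall>x\<in>path_alg V E t h. \<forall>y\<in>path_alg V E t h.
        congI I (D (\<lambda>p. x p + y p)) (\<lambda>p. D x p + D y p)) \<and>
     (\<forall>c. \<forall>x\<in>path_alg V E t h. congI I (D (smul c x)) (smul c (D x))) \<and>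
     (\<forall>x\<in>path_alg V E t h. \<forall>y\<in>path_alg V E t h.
        congI I (D (pmult h x y)) (\<lambda>p. pmult h (D x) y p + pmult h x (D y) p))"

definition Dm :: "('e \<Rightarrow> 'v) \<Rightarrow> ('v, 'e, 'k::comm_ring_1) pelt \<Rightarrow> ('v, 'e, 'k) pelt \<Rightarrow> ('v, 'e, 'k) pelt" where
  "Dm h m = (\<lambda>x p. pmult h m x p - pmult h x m p)"

text \<open>D_{r, s-bar}: the (unique modulo I) differential operator sending r to s-bar and
  killing all other arrows and all vertices.\<close>
definition Drs :: "'v set \<Rightarrow> 'e set \<Rightarrow> ('e \<Rightarrow> 'v) \<Rightarrow> ('e \<Rightarrow> 'v) \<Rightarrow> ('v, 'e, 'k::comm_ring_1) pelt set
     \<Rightarrow> 'e \<Rightarrow> ('v, 'e) qpath \<Rightarrow> ('v, 'e, 'k) pelt \<Rightarrow> ('v, 'e, 'k) pelt" where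
  "Drs V E t h I r s = (SOME D. is_diffop V E t h I D \<and>
      congI I (D (bas (t r, [r]))) (bas s) \<and>
      (\<forall>a\<in>E. a \<noteq> r \<longrightarrow> congI I (D (bas (t a, [a]))) (\<lambda>_. 0)) \<and>
      (\<forall>v\<in>V. congI I (D (bas (v, []))) (\<lambda>_. 0)))"

definition quiver_connected :: "'v set \<Rightarrow> 'e set \<Rightarrow> ('e \<Rightarrow> 'v) \<Rightarrow> ('e \<Rightarrow> 'v) \<Rightarrow> bool" where
  "quiver_connected V E t h \<longleftrightarrow>
     (\<forall>u\<in>V. \<forall>w\<in>V. (u, w) \<in> ({(t a, h a) | a. a \<in> E} \<union> {(h a, t a) | a. a \<in> E})\<^sup>*)"

end

theory Submission
  imports Defs "HOL-Library.Function_Algebras"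
begin

lemma sum_fun_apply: "(\<Sum>a\<in>A. f a) x = (\<Sum>a\<in>A. f a x)"
  by (induction A rule: infinite_finite_induct) auto

definition supp :: "('v,'e,'k::zero) pelt \<Rightarrow> ('v,'e) qpath set" where
  "supp x = {p. x p \<noteq> 0}"

lemma smul_apply[simp]: "smul c x p = c * x p" by (simp add: smul_def)
lemma bas_apply: "bas w p = (if p = w then 1 else 0)" by (simp add: bas_def)

lemma smul_add: "smul c (x + y) = smul c x + smul (c::'k::comm_ring_1) y"
  by (rule ext) (simp add: algebra_simps)
lemma smul_diff: "smul c (x - y) = smul c x - smul (c::'k::comm_ring_1) y"
  by (rule ext) (simp add: algebra_simps)
lemma smul_sum: "smul c (\<Sum>j\<in>J. f j) = (\<Sum>j\<in>J. smul (c::'k::comm_ring_1) (f j))"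
  by (rule ext) (simp add: sum_fun_apply sum_distrib_left)

lemma expand: fixes x :: "('v,'e,'k::comm_ring_1) pelt"
  assumes "finite F" "supp x \<subseteq> F"
  shows "x = (\<Sum>w\<in>F. smul (x w) (bas w))"
proof (rule ext)
  fix z
  have "(\<Sum>w\<in>F. smul (x w) (bas w)) z = (\<Sum>w\<in>F. if w = z then x z else 0)"
    by (simp add: sum_fun_apply bas_apply) (rule sum.cong, auto)
  also have "\<dots> = x z" using assms by (auto simp: supp_def)
  finally show "x z = (\<Sum>w\<in>F. smul (x w) (bas w)) z" by simp
qed

lemma pmult_add1: "pmult h (x + y) z = pmult h x z + pmult h y z"
  by (rule ext) (simp add: pmult_def sum.distrib algebra_simps)
lemma pmult_add2: "pmult h z (x + y) = pmult h z x + pmult h z y"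
  by (rule ext) (simp add: pmult_def sum.distrib algebra_simps)
lemma pmult_diff1: "pmult h (x - y) z = pmult h x z - pmult h y z"
  by (rule ext) (simp add: pmult_def sum_subtractf algebra_simps)
lemma pmult_diff2: "pmult h z (x - y) = pmult h z x - pmult h z y"
  by (rule ext) (simp add: pmult_def sum_subtractf algebra_simps)
lemma pmult_smul1: "pmult h (smul c x) z = smul c (pmult h x z)"
  by (rule ext) (simp add: pmult_def sum_distrib_left algebra_simps)
lemma pmult_smul2: "pmult h z (smul c x) = smul c (pmult h z x)"
  by (rule ext) (simp add: pmult_def sum_distrib_left algebra_simps)
lemma pmult_zero1: "pmult h 0 z = 0"
  by (rule ext) (simp add: pmult_def)
lemma pmult_zero2: "pmult h z 0 = 0"
  by (rule ext) (simp add: pmult_def)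
lemma pmult_sum1: "pmult h (\<Sum>j\<in>J. f j) z = (\<Sum>j\<in>J. pmult h (f j) z)"
proof (induction J rule: infinite_finite_induct)
  case (infinite A) then show ?case by (simp only: infinite sum.infinite pmult_zero1)
next
  case empty then show ?case by (simp only: sum.empty pmult_zero1)
next
  case (insert x F) then show ?case by (simp only: sum.insert[OF insert(1,2)] pmult_add1 insert(3))
qed
lemma pmult_sum2: "pmult h z (\<Sum>j\<in>J. f j) = (\<Sum>j\<in>J. pmult h z (f j))"
proof (induction J rule: infinite_finite_induct)
  case (infinite A) then show ?case by (simp only: infinite sum.infinite pmult_zero2)
next
  case empty then show ?case by (simp only: sum.empty pmult_zero2)
next
  case (insert x F) then show ?case by (simp only: sum.insert[OF insert(1,2)] pmult_add2 insert(3))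
qed

definition mulb :: "('e \<Rightarrow> 'v) \<Rightarrow> ('v,'e) qpath \<Rightarrow> ('v,'e) qpath \<Rightarrow> ('v,'e,'k::comm_ring_1) pelt" where
  "mulb h p p' = (if pend h p = fst p' then bas (pcat p p') else 0)"

lemma pmult_bas_trm:
  "i \<le> length (snd z) \<Longrightarrow> bas p (fst z, take i (snd z)) * bas p' (pend h (fst z, take i (snd z)), drop i (snd z))
      = (of_bool (i = length (snd p) \<and> z = pcat p p' \<and> pend h p = fst p') :: 'k::comm_ring_1)"
proof -
  assume "i \<le> length (snd z)"
  then have "((fst z, take i (snd z)) = p \<and> (pend h (fst z, take i (snd z)), drop i (snd z)) = p')
        = (i = length (snd p) \<and> z = pcat p p' \<and> pend h p = fst p')"
      by (cases z; cases p; cases p') (auto simp: pcat_def)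
  thus ?thesis by (auto simp: bas_apply)
qed

lemma pmult_bas: "pmult h (bas p) (bas p') = mulb h p p'"
proof (rule ext)
  fix z
  have "pmult h (bas p) (bas p') z = (\<Sum>i\<in>{0..length (snd z)}. of_bool (i = length (snd p) \<and> z = pcat p p' \<and> pend h p = fst p'))"
    unfolding pmult_def by (rule sum.cong[OF refl], rule pmult_bas_trm) simp
  also have "\<dots> = of_bool (z = pcat p p' \<and> pend h p = fst p')"
    by (auto simp: pcat_def)
  also have "\<dots> = mulb h p p' z" by (auto simp: mulb_def bas_apply)
  finally show "pmult h (bas p) (bas p') z = mulb h p p' z" .
qed


lemma is_qpath_Nil: "is_qpath V E t h (v, []) \<longleftrightarrow> v \<in> V"
  by (simp add: is_qpath_def)

lemma is_qpath_Cons: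
  assumes HV: "\<forall>a\<in>E. h a \<in> V"
  shows "is_qpath V E t h (v, a # l) \<longleftrightarrow> v \<in> V \<and> a \<in> E \<and> t a = v \<and> is_qpath V E t h (h a, l)"
proof
  assume H: "is_qpath V E t h (v, a # l)"
  then have 1: "v \<in> V" "a \<in> E" "t a = v" "set l \<subseteq> E"
    and 2: "\<forall>i. Suc i < Suc (length l) \<longrightarrow> h ((a # l) ! i) = t ((a # l) ! Suc i)"
    by (auto simp: is_qpath_def)
  have "l \<noteq> [] \<longrightarrow> t (hd l) = h a"
    using 2[rule_format, of 0] by (cases l) auto
  moreover have "\<forall>i. Suc i < length l \<longrightarrow> h (l ! i) = t (l ! Suc i)"
    using 2 by (metis Suc_less_eq nth_Cons_Suc)
  ultimately show "v \<in> V \<and> a \<in> E \<and> t a = v \<and> is_qpath V E t h (h a, l)"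
    using 1 HV by (auto simp: is_qpath_def)
next
  assume H: "v \<in> V \<and> a \<in> E \<and> t a = v \<and> is_qpath V E t h (h a, l)"
  then have 1: "v \<in> V" "a \<in> E" "t a = v" "set l \<subseteq> E"
    and 2: "\<forall>i. Suc i < length l \<longrightarrow> h (l ! i) = t (l ! Suc i)"
    and 3: "l \<noteq> [] \<longrightarrow> t (hd l) = h a"
    by (auto simp: is_qpath_def)
  have "\<forall>i. Suc i < length (a # l) \<longrightarrow> h ((a # l) ! i) = t ((a # l) ! Suc i)"
  proof (intro allI impI)
    fix i assume "Suc i < length (a # l)"
    then show "h ((a # l) ! i) = t ((a # l) ! Suc i)"
      using 2 3 by (cases i) (auto simp: hd_conv_nth)
  qed
  then show "is_qpath V E t h (v, a # l)" using 1 by (auto simp: is_qpath_def)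
qed

lemma is_qpath_append:
  assumes HV: "\<forall>a\<in>E. h a \<in> V"
  shows "is_qpath V E t h (v, l1 @ l2) \<longleftrightarrow> is_qpath V E t h (v, l1) \<and> is_qpath V E t h (pend h (v, l1), l2)"
proof (induction l1 arbitrary: v)
  case Nil
  then show ?case by (auto simp: pend_def is_qpath_def)
next
  case (Cons a l1)
  have pe: "pend h (v, a # l1) = pend h (h a, l1)" by (simp add: pend_def)
  show ?case
    unfolding append_Cons is_qpath_Cons[OF HV] Cons pe by auto
qed

definition repl :: "('v,'e) qpath \<Rightarrow> ('v,'e) qpath \<Rightarrow> nat \<Rightarrow> ('v,'e) qpath" where
  "repl s w i = (fst w, take i (snd w) @ snd s @ drop (Suc i) (snd w))"

definition Db :: "'e \<Rightarrow> ('v,'e) qpath \<Rightarrow> ('v,'e) qpath \<Rightarrow> ('v,'e,'k::comm_ring_1) pelt" where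
  "Db r s w = (\<Sum>i<length (snd w). if snd w ! i = r then bas (repl s w i) else 0)"

definition Dop :: "'e \<Rightarrow> ('v,'e) qpath \<Rightarrow> ('v,'e,'k::comm_ring_1) pelt \<Rightarrow> ('v,'e,'k) pelt" where
  "Dop r s x = (\<Sum>w\<in>supp x. smul (x w) (Db r s w))"

lemma supp_bas: "supp (bas w :: ('v,'e,'k::comm_ring_1) pelt) = {w}"
  by (auto simp: supp_def bas_apply)
lemma supp_add: "supp (x + (y::('v,'e,'k::comm_ring_1) pelt)) \<subseteq> supp x \<union> supp y"
  by (auto simp: supp_def)
lemma supp_smul: "supp (smul c (x::('v,'e,'k::comm_ring_1) pelt)) \<subseteq> supp x"
  by (auto simp: supp_def)
lemma supp_zero[simp]: "supp (0::('v,'e,'k::comm_ring_1) pelt) = {}"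
  by (auto simp: supp_def)
lemma fin_sum: "(\<And>j. j \<in> J \<Longrightarrow> finite (supp (f j::('v,'e,'k::comm_ring_1) pelt))) \<Longrightarrow> finite (supp (\<Sum>j\<in>J. f j))"
proof (induction J rule: infinite_finite_induct)
  case (insert x F)
  have e: "sum f (insert x F) = f x + sum f F" using insert(1,2) by (rule sum.insert)
  have "finite (supp (f x + sum f F))"
    by (rule finite_subset[OF supp_add]) (use insert in auto)
  then show ?case by (simp only: e)
qed auto
lemma fin_if: "finite (supp (x::('v,'e,'k::comm_ring_1) pelt)) \<Longrightarrow> finite (supp (if c then x else 0))"
  by (cases c) auto
lemma fin_Db: "finite (supp (Db r s w))"
  unfolding Db_def by (rule fin_sum) (auto simp: supp_bas)
lemma fin_mulb: "finite (supp (mulb h w w' :: ('v,'e,'k::comm_ring_1) pelt))"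
  by (auto simp: mulb_def supp_bas)
lemma fin_smul: "finite (supp (x::('v,'e,'k::comm_ring_1) pelt)) \<Longrightarrow> finite (supp (smul c x))"
  using supp_smul finite_subset by blast

lemma smul_zero_left[simp]: "smul 0 (x::('v,'e,'k::comm_ring_1) pelt) = 0" by (rule ext) simp
lemma smul_zero_right[simp]: "smul c (0::('v,'e,'k::comm_ring_1) pelt) = 0" by (rule ext) simp
lemma smul_addc: "smul (a + b) (x::('v,'e,'k::comm_ring_1) pelt) = smul a x + smul b x" by (rule ext) (simp add: algebra_simps)
lemma smul_smul: "smul a (smul b (x::('v,'e,'k::comm_ring_1) pelt)) = smul (a * b) x" by (rule ext) (simp add: algebra_simps)

lemma Dop_F:
  assumes "finite F" "supp x \<subseteq> F"
  shows "Dop r s x = (\<Sum>w\<in>F. smul (x w) (Db r s w))"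
  unfolding Dop_def
  by (rule sum.mono_neutral_left) (use assms in \<open>auto simp: supp_def\<close>)

lemma Dop_add:
  assumes "finite (supp x)" "finite (supp y)"
  shows "Dop r s (x + y) = Dop r s x + Dop r s y"
proof -
  let ?F = "supp x \<union> supp y"
  have "Dop r s (x + y) = (\<Sum>w\<in>?F. smul ((x + y) w) (Db r s w))"
    by (rule Dop_F) (use assms supp_add in auto)
  also have "\<dots> = (\<Sum>w\<in>?F. smul (x w) (Db r s w)) + (\<Sum>w\<in>?F. smul (y w) (Db r s w))"
    by (simp add: smul_addc sum.distrib)
  also have "\<dots> = Dop r s x + Dop r s y"
    using assms by (simp add: Dop_F[of "?F" x] Dop_F[of "?F" y])
  finally show ?thesis .
qed

lemma Dop_smul:
  assumes "finite (supp x)"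
  shows "Dop r s (smul c x) = smul c (Dop r s x)"
proof -
  have "Dop r s (smul c x) = (\<Sum>w\<in>supp x. smul (smul c x w) (Db r s w))"
    by (rule Dop_F) (use assms supp_smul in auto)
  also have "\<dots> = smul c (Dop r s x)"
    by (simp add: Dop_def smul_sum smul_smul)
  finally show ?thesis .
qed

lemma Dop_zero: "Dop r s 0 = 0"
  by (simp add: Dop_def)

lemma Dop_bas: "Dop r s (bas w) = Db r s w"
  by (simp add: Dop_def supp_bas bas_apply smul_def)

lemma Dop_sum:
  "(\<And>j. j \<in> J \<Longrightarrow> finite (supp (f j))) \<Longrightarrow> Dop r s (\<Sum>j\<in>J. f j) = (\<Sum>j\<in>J. Dop r s (f j))"
proof (induction J rule: infinite_finite_induct)
  case (infinite A)
  then show ?case by (simp add: Dop_def supp_def zero_fun_def)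
next
  case empty
  then show ?case by (simp only: sum.empty Dop_zero)
next
  case (insert x F)
  have "Dop r s (sum f (insert x F)) = Dop r s (f x + sum f F)"
    using insert(1,2) by simp
  also have "\<dots> = Dop r s (f x) + Dop r s (sum f F)"
    by (rule Dop_add) (use insert in \<open>auto intro!: fin_sum\<close>)
  moreover have "Dop r s (sum f F) = (\<Sum>j\<in>F. Dop r s (f j))" using insert by auto
  ultimately show ?case by (simp only: sum.insert[OF insert(1,2)])
qed


lemma fst_repl[simp]: "fst (repl s w i) = fst w" by (simp add: repl_def)

lemma pend_repl:
  assumes "snd s \<noteq> []" "pend h s = h r" "i < length (snd w)" "snd w ! i = r"
  shows "pend h (repl s w i) = pend h w"
proof (cases "drop (Suc i) (snd w) = []")
  case True
  then have "length (snd w) = Suc i" using assms(3) by simp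
  moreover have "snd w \<noteq> []" using assms(3) by auto
  ultimately have "last (snd w) = r" using assms(4) by (simp add: last_conv_nth)
  then show ?thesis using assms True by (auto simp: repl_def pend_def)
next
  case False
  then have "last (snd w) = last (drop (Suc i) (snd w))" by simp
  then show ?thesis using assms False by (auto simp: repl_def pend_def)
qed

lemma pcat_repl1: "i < length (snd w) \<Longrightarrow> pcat (repl s w i) w' = repl s (pcat w w') i"
  by (simp add: repl_def pcat_def)
lemma pcat_repl2: "pcat w (repl s w' i) = repl s (pcat w w') (length (snd w) + i)"
  by (simp add: repl_def pcat_def)

lemma sum_split_lt: "(\<Sum>i<m+(n::nat). g i) = (\<Sum>i<m. g i) + (\<Sum>i<n. g (m+i))"
  by (induction n) (simp_all add: add.assoc)

lemma pmult_if1: "pmult h (if c then a else 0) b = (if c then pmult h a b else 0)"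
  by (simp add: pmult_zero1)
lemma pmult_if2: "pmult h b (if c then a else 0) = (if c then pmult h b a else 0)"
  by (simp add: pmult_zero2)

lemma Db_leib:
  fixes w w' s :: "('v,'e) qpath" and r :: 'e and h :: "'e \<Rightarrow> 'v"
  assumes "snd s \<noteq> []" "pend h s = h r"
  shows "(Dop r s (mulb h w w') :: ('v,'e,'k::comm_ring_1) pelt) = pmult h (Db r s w) (bas w') + pmult h (bas w) (Db r s w')"
proof -
  have A: "pmult h (Db r s w) (bas w') = (\<Sum>i<length (snd w). if snd w ! i = r then mulb h (repl s w i) w' else 0)"
    unfolding Db_def pmult_sum1 pmult_if1 pmult_bas ..
  have B: "pmult h (bas w) (Db r s w') = (\<Sum>i<length (snd w'). if snd w' ! i = r then mulb h w (repl s w' i) else 0)"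
    unfolding Db_def pmult_sum2 pmult_if2 pmult_bas ..
  show ?thesis
  proof (cases "pend h w = fst w'")
    case True
    have A': "pmult h (Db r s w) (bas w') = (\<Sum>i<length (snd w). if snd (pcat w w') ! i = r then bas (repl s (pcat w w') i) else 0)"
      unfolding A
    proof (rule sum.cong[OF refl])
      fix i assume i: "i \<in> {..<length (snd w)}"
      then have "snd (pcat w w') ! i = snd w ! i" by (simp add: pcat_def nth_append)
      then show "(if snd w ! i = r then mulb h (repl s w i) w' else 0) = (if snd (pcat w w') ! i = r then bas (repl s (pcat w w') i) else 0)"
        using i True pend_repl[OF assms, of i w] pcat_repl1[of i w s w'] by (auto simp: mulb_def)
    qed
    have B': "pmult h (bas w) (Db r s w') = (\<Sum>i<length (snd w'). if snd (pcat w w') ! (length (snd w) + i) = r then bas (repl s (pcat w w') (length (snd w) + i)) else 0)"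
      unfolding B
    proof (rule sum.cong[OF refl])
      fix i assume i: "i \<in> {..<length (snd w')}"
      then have "snd (pcat w w') ! (length (snd w) + i) = snd w' ! i" by (simp add: pcat_def nth_append)
      then show "(if snd w' ! i = r then mulb h w (repl s w' i) else 0) = (if snd (pcat w w') ! (length (snd w) + i) = r then bas (repl s (pcat w w') (length (snd w) + i)) else 0)"
        using i True pcat_repl2[of w s w' i] by (auto simp: mulb_def)
    qed
    have "Dop r s (mulb h w w') = Db r s (pcat w w')"
      using True by (simp add: mulb_def Dop_bas)
    also have "\<dots> = (\<Sum>i<length (snd w) + length (snd w'). if snd (pcat w w') ! i = r then bas (repl s (pcat w w') i) else 0)"
      unfolding Db_def by (simp add: pcat_def del: repl_def)
    also have "\<dots> = pmult h (Db r s w) (bas w') + pmult h (bas w) (Db r s w')"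
      unfolding A' B' by (rule sum_split_lt)
    finally show ?thesis .
  next
    case False
    have "pmult h (Db r s w) (bas w') = (0::('v,'e,'k) pelt)"
      unfolding A by (rule sum.neutral) (use False pend_repl[OF assms] in \<open>auto simp: mulb_def\<close>)
    moreover have "pmult h (bas w) (Db r s w') = (0::('v,'e,'k) pelt)"
      unfolding B by (rule sum.neutral) (use False in \<open>auto simp: mulb_def\<close>)
    moreover have "Dop r s (mulb h w w') = (0::('v,'e,'k) pelt)"
      using False by (simp add: mulb_def Dop_zero)
    ultimately show ?thesis by (simp only: add.right_neutral)
  qed
qed


lemma bil:
  fixes f g :: "_ \<Rightarrow> ('v,'e,'k::comm_ring_1) pelt"
  shows "pmult h (\<Sum>w\<in>A. smul (a w) (f w)) (\<Sum>w'\<in>B. smul (b w') (g w'))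
    = (\<Sum>w\<in>A. \<Sum>w'\<in>B. smul (a w * b w') (pmult h (f w) (g w')))"
  by (simp only: pmult_sum1 pmult_sum2 pmult_smul1 pmult_smul2 smul_sum smul_smul mult.commute[of "b _" "a _"]) (rule sum.swap)

lemma Dop_leib:
  fixes x y :: "('v,'e,'k::comm_ring_1) pelt" and s :: "('v,'e) qpath"
  assumes "snd s \<noteq> []" "pend h s = h r" "finite (supp x)" "finite (supp y)"
  shows "Dop r s (pmult h x y) = pmult h (Dop r s x) y + pmult h x (Dop r s y)"
proof -
  let ?X = "supp x" and ?Y = "supp y"
  have ex: "x = (\<Sum>w\<in>?X. smul (x w) (bas w))" by (rule expand) (use assms in auto)
  have ey: "y = (\<Sum>w\<in>?Y. smul (y w) (bas w))" by (rule expand) (use assms in auto)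
  have dx: "Dop r s x = (\<Sum>w\<in>?X. smul (x w) (Db r s w))" by (simp add: Dop_def)
  have dy: "Dop r s y = (\<Sum>w\<in>?Y. smul (y w) (Db r s w))" by (simp add: Dop_def)
  have "pmult h x y = pmult h (\<Sum>w\<in>?X. smul (x w) (bas w)) (\<Sum>w\<in>?Y. smul (y w) (bas w))"
    using ex ey by (rule arg_cong2[where f="pmult h"])
  also have "\<dots> = (\<Sum>w\<in>?X. \<Sum>w'\<in>?Y. smul (x w * y w') (mulb h w w'))"
    by (simp only: bil pmult_bas)
  finally have pxy: "pmult h x y = (\<Sum>w\<in>?X. \<Sum>w'\<in>?Y. smul (x w * y w') (mulb h w w'))" .
  have "Dop r s (pmult h x y) = (\<Sum>w\<in>?X. \<Sum>w'\<in>?Y. Dop r s (smul (x w * y w') (mulb h w w')))"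
    unfolding pxy
    by (subst Dop_sum, rule fin_sum, rule fin_smul, rule fin_mulb, rule sum.cong[OF refl], rule Dop_sum,
        rule fin_smul, rule fin_mulb)
  also have "\<dots> = (\<Sum>w\<in>?X. \<Sum>w'\<in>?Y. smul (x w * y w') (pmult h (Db r s w) (bas w')) + smul (x w * y w') (pmult h (bas w) (Db r s w')))"
    by (simp only: Dop_smul[OF fin_mulb] Db_leib[OF assms(1,2)] smul_add)
  also have "\<dots> = (\<Sum>w\<in>?X. \<Sum>w'\<in>?Y. smul (x w * y w') (pmult h (Db r s w) (bas w'))) + (\<Sum>w\<in>?X. \<Sum>w'\<in>?Y. smul (x w * y w') (pmult h (bas w) (Db r s w')))"
    by (simp only: sum.distrib)
  also have "\<dots> = pmult h (Dop r s x) y + pmult h x (Dop r s y)"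
  proof -
    have 1: "pmult h (Dop r s x) y = (\<Sum>w\<in>?X. \<Sum>w'\<in>?Y. smul (x w * y w') (pmult h (Db r s w) (bas w')))"
      unfolding dx by (subst ey) (rule bil)
    have 2: "pmult h x (Dop r s y) = (\<Sum>w\<in>?X. \<Sum>w'\<in>?Y. smul (x w * y w') (pmult h (bas w) (Db r s w')))"
      unfolding dy by (subst ex) (rule bil)
    show ?thesis unfolding 1 2 ..
  qed
  finally show ?thesis .
qed


lemma repl_valid:
  assumes HV: "\<forall>a\<in>E. h a \<in> V" and w: "is_qpath V E t h w" and i: "i < length (snd w)" "snd w ! i = r"
    and s: "is_qpath V E t h s" "fst s = t r" "pend h s = h r"
  shows "is_qpath V E t h (repl s w i)"
proof -
  obtain v l where wv: "w = (v, l)" by (cases w)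
  have l: "l = take i l @ (r # drop (Suc i) l)" using i wv by (metis id_take_nth_drop snd_conv)
  have "is_qpath V E t h (v, take i l @ (r # drop (Suc i) l))" using w wv l by simp
  then have 1: "is_qpath V E t h (v, take i l)" and 2: "is_qpath V E t h (pend h (v, take i l), r # drop (Suc i) l)"
    by (simp_all only: is_qpath_append[OF HV])
  from 2 have 3: "t r = pend h (v, take i l)" "is_qpath V E t h (h r, drop (Suc i) l)"
    by (simp_all add: is_qpath_Cons[OF HV])
  have s': "s = (fst s, snd s)" by simp
  have "is_qpath V E t h (fst s, snd s @ drop (Suc i) l)"
    using s 3 s' by (metis is_qpath_append[OF HV])
  then have "is_qpath V E t h (v, take i l @ (snd s @ drop (Suc i) l))"
    using 1 3 s by (simp add: is_qpath_append[OF HV])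
  then show ?thesis using wv by (simp add: repl_def)
qed

lemma Dop_pa:
  fixes x :: "('v,'e,'k::comm_ring_1) pelt"
  assumes HV: "\<forall>a\<in>E. h a \<in> V"
    and s: "is_qpath V E t h s" "fst s = t r" "pend h s = h r"
    and x: "x \<in> path_alg V E t h"
  shows "Dop r s x \<in> path_alg V E t h"
proof -
  have fin: "finite (supp (Dop r s x))"
    unfolding Dop_def by (intro fin_sum fin_smul fin_Db)
  have "is_qpath V E t h z" if nz: "Dop r s x z \<noteq> 0" for z
  proof -
    have "(\<Sum>w\<in>supp x. x w * Db r s w z) \<noteq> (0::'k)" using nz by (simp add: Dop_def sum_fun_apply)
    then obtain w where w: "w \<in> supp x" "x w * Db r s w z \<noteq> 0"
      by (meson sum.neutral)
    then have "Db r s w z \<noteq> (0::'k)" by auto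
    then have "(\<Sum>i<length (snd w). (if snd w ! i = r then bas (repl s w i) else 0) z) \<noteq> (0::'k)"
      by (simp add: Db_def sum_fun_apply)
    then obtain i where i: "i < length (snd w)" "(if snd w ! i = r then bas (repl s w i) else 0) z \<noteq> (0::'k)"
      by (meson sum.neutral lessThan_iff)
    then have i2: "snd w ! i = r" "z = repl s w i"
      by (auto split: if_splits simp: bas_apply)
    have "is_qpath V E t h w" using x w(1) unfolding path_alg_def supp_def by blast
    then show ?thesis using repl_valid[OF HV _ i(1) i2(1) s] i2 by simp
  qed
  then show ?thesis using fin by (auto simp: path_alg_def supp_def)
qed

lemma congI_refl: "is_ideal V E t h I \<Longrightarrow> congI I x x"
  by (simp add: congI_def is_ideal_def)

lemma pa_fin: "x \<in> path_alg V E t h \<Longrightarrow> finite (supp x)"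
  by (simp add: path_alg_def supp_def)

lemma Drs_spec:
  fixes I :: "('v,'e,'k::comm_ring_1) pelt set"
  assumes HV: "\<forall>a\<in>E. h a \<in> V" and I: "is_ideal V E t h I"
    and s: "is_qpath V E t h s" "fst s = t r" "pend h s = h r" "snd s \<noteq> []"
  shows "is_diffop V E t h I (Drs V E t h I r s) \<and>
      congI I (Drs V E t h I r s (bas (t r, [r]))) (bas s) \<and>
      (\<forall>a\<in>E. a \<noteq> r \<longrightarrow> congI I (Drs V E t h I r s (bas (t a, [a]))) (\<lambda>_. 0)) \<and>
      (\<forall>v\<in>V. congI I (Drs V E t h I r s (bas (v, []))) (\<lambda>_. 0))"
  unfolding Drs_def
proof (rule someI[where x="Dop r s"], intro conjI ballI impI allI)
  show "is_diffop V E t h I (Dop r s)"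
    unfolding is_diffop_def
  proof (intro conjI ballI allI)
    fix x :: "('v,'e,'k) pelt" assume "x \<in> path_alg V E t h"
    then show "Dop r s x \<in> path_alg V E t h" using Dop_pa[OF HV s(1-3)] by blast
  next
    fix x y :: "('v,'e,'k) pelt" assume x: "x \<in> path_alg V E t h" and y: "y \<in> path_alg V E t h"
    have "Dop r s (\<lambda>p. x p + y p) = (\<lambda>p. Dop r s x p + Dop r s y p)"
      using Dop_add[OF pa_fin[OF x] pa_fin[OF y], of r s] by (simp add: plus_fun_def)
    then show "congI I (Dop r s (\<lambda>p. x p + y p)) (\<lambda>p. Dop r s x p + Dop r s y p)"
      using congI_refl[OF I] by simp
    have "Dop r s (pmult h x y) = (\<lambda>p. pmult h (Dop r s x) y p + pmult h x (Dop r s y) p)"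
      using Dop_leib[OF s(4,3) pa_fin[OF x] pa_fin[OF y]] by (simp add: plus_fun_def)
    then show "congI I (Dop r s (pmult h x y)) (\<lambda>p. pmult h (Dop r s x) y p + pmult h x (Dop r s y) p)"
      using congI_refl[OF I] by simp
  next
    fix c and x :: "('v,'e,'k) pelt" assume x: "x \<in> path_alg V E t h"
    show "congI I (Dop r s (smul c x)) (smul c (Dop r s x))"
      using Dop_smul[OF pa_fin[OF x]] congI_refl[OF I] by simp
  qed
next
  have "(t r, snd s) = s" using s(2) by (cases s) auto
  then have "Dop r s (bas (t r, [r])) = (bas s :: ('v,'e,'k) pelt)"
    by (simp add: Dop_bas Db_def repl_def)
  then show "congI I (Dop r s (bas (t r, [r]))) (bas s)" using congI_refl[OF I] by simp
next
  fix a assume "a \<in> E" "a \<noteq> r"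
  then have "Dop r s (bas (t a, [a])) = (\<lambda>_. 0::'k)"
    unfolding Dop_bas Db_def zero_fun_def[symmetric] by simp
  then show "congI I (Dop r s (bas (t a, [a]))) (\<lambda>_. 0)" using congI_refl[OF I] by simp
next
  fix v assume "v \<in> V"
  have "Dop r s (bas (v, [])) = (\<lambda>_. 0::'k)"
    by (simp add: Dop_bas Db_def zero_fun_def)
  then show "congI I (Dop r s (bas (v, []))) (\<lambda>_. 0)" using congI_refl[OF I] by simp
qed


context
  fixes V :: "'v set" and E :: "'e set" and t h :: "'e \<Rightarrow> 'v" and I :: "('v,'e,'k::comm_ring_1) pelt set"
  assumes I: "is_ideal V E t h I"
begin

lemma I0: "0 \<in> I" using I by (simp add: is_ideal_def zero_fun_def)
lemma I0': "(\<lambda>_. 0) \<in> I" using I by (simp add: is_ideal_def)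
lemma Iadd: "x \<in> I \<Longrightarrow> y \<in> I \<Longrightarrow> x + y \<in> I" using I by (simp add: is_ideal_def plus_fun_def)
lemma Ismul: "x \<in> I \<Longrightarrow> smul c x \<in> I" using I by (simp add: is_ideal_def)
lemma Ineg: "x \<in> I \<Longrightarrow> - x \<in> I"
proof -
  assume "x \<in> I"
  then have "smul (-1) x \<in> I" by (rule Ismul)
  moreover have "smul (-1) x = - x" by (rule ext) simp
  ultimately show ?thesis by simp
qed
lemma Idiff: "x \<in> I \<Longrightarrow> y \<in> I \<Longrightarrow> x - y \<in> I"
  using Iadd[OF _ Ineg, of x y] by simp
lemma Isum: "(\<And>j. j \<in> J \<Longrightarrow> f j \<in> I) \<Longrightarrow> (\<Sum>j\<in>J. f j) \<in> I"
proof (induction J rule: infinite_finite_induct)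
  case (infinite A) then show ?case using I0 I0' by simp
next
  case empty then show ?case using I0 I0' by simp
next
  case (insert x F)
  then have "f x + sum f F \<in> I" by (intro Iadd) auto
  then show ?case using insert(1,2) by (simp only: sum.insert[OF insert(1,2)])
qed
lemma Imul1: "a \<in> path_alg V E t h \<Longrightarrow> x \<in> I \<Longrightarrow> pmult h a x \<in> I"
  using I by (simp add: is_ideal_def)
lemma Imul2: "a \<in> path_alg V E t h \<Longrightarrow> x \<in> I \<Longrightarrow> pmult h x a \<in> I"
  using I by (simp add: is_ideal_def)
lemma congI_iff: "congI I u v \<longleftrightarrow> u - v \<in> I"
  by (simp add: congI_def fun_diff_def)

definition Qop :: "(('v,'e,'k) pelt \<Rightarrow> ('v,'e,'k) pelt) \<Rightarrow> bool" where
  "Qop D \<longleftrightarrow>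
   (\<forall>x\<in>path_alg V E t h. \<forall>y\<in>path_alg V E t h. D (x + y) - (D x + D y) \<in> I) \<and>
   (\<forall>c. \<forall>x\<in>path_alg V E t h. D (smul c x) - smul c (D x) \<in> I) \<and>
   (\<forall>p a. is_qpath V E t h p \<longrightarrow> a \<in> E \<longrightarrow>
      D (pmult h (bas p) (bas (t a, [a]))) - (pmult h (D (bas p)) (bas (t a, [a])) + pmult h (bas p) (D (bas (t a, [a])))) \<in> I)"

lemma bas_pa: "is_qpath V E t h p \<Longrightarrow> bas p \<in> path_alg V E t h"
  by (auto simp: path_alg_def bas_apply)

lemma arrow_valid: "\<forall>a\<in>E. t a \<in> V \<and> h a \<in> V \<Longrightarrow> a \<in> E \<Longrightarrow> is_qpath V E t h (t a, [a])"
  by (simp add: is_qpath_def)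

lemma diffop_Q:
  assumes HV: "\<forall>a\<in>E. t a \<in> V \<and> h a \<in> V" and D: "is_diffop V E t h I D"
  shows "Qop D"
  unfolding Qop_def
proof (intro conjI ballI allI impI)
  fix x y :: "('v,'e,'k) pelt" assume x: "x \<in> path_alg V E t h" and y: "y \<in> path_alg V E t h"
  then show "D (x + y) - (D x + D y) \<in> I"
    using D unfolding is_diffop_def congI_iff by (simp add: plus_fun_def)
next
  fix c and x :: "('v,'e,'k) pelt" assume x: "x \<in> path_alg V E t h"
  then show "D (smul c x) - smul c (D x) \<in> I"
    using D unfolding is_diffop_def congI_iff by simp
next
  fix p a assume p: "is_qpath V E t h p" and a: "a \<in> E"
  have b: "bas p \<in> path_alg V E t h" "bas (t a, [a]) \<in> path_alg V E t h"
    using bas_pa[OF p] bas_pa[OF arrow_valid[OF HV a]] by auto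
  have L: "\<forall>x\<in>path_alg V E t h. \<forall>y\<in>path_alg V E t h. congI I (D (pmult h x y)) (\<lambda>p. pmult h (D x) y p + pmult h x (D y) p)"
    using D unfolding is_diffop_def by blast
  show "D (pmult h (bas p) (bas (t a, [a]))) - (pmult h (D (bas p)) (bas (t a, [a])) + pmult h (bas p) (D (bas (t a, [a])))) \<in> I"
    using L[rule_format, OF b] unfolding congI_iff by (simp add: plus_fun_def)
qed

lemma Q_add:
  assumes "Qop D1" "Qop D2"
  shows "Qop (\<lambda>x. D1 x + D2 x)"
  unfolding Qop_def
proof (intro conjI ballI allI impI)
  fix x y :: "('v,'e,'k) pelt" assume x: "x \<in> path_alg V E t h" and y: "y \<in> path_alg V E t h"
  have "D1 (x + y) + D2 (x + y) - (D1 x + D2 x + (D1 y + D2 y)) =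
     (D1 (x + y) - (D1 x + D1 y)) + (D2 (x + y) - (D2 x + D2 y))" by (simp add: algebra_simps)
  then show "D1 (x + y) + D2 (x + y) - (D1 x + D2 x + (D1 y + D2 y)) \<in> I"
    using assms x y unfolding Qop_def by (metis Iadd)
next
  fix c and x :: "('v,'e,'k) pelt" assume x: "x \<in> path_alg V E t h"
  have "D1 (smul c x) + D2 (smul c x) - smul c (D1 x + D2 x) =
    (D1 (smul c x) - smul c (D1 x)) + (D2 (smul c x) - smul c (D2 x))"
    by (simp add: smul_add algebra_simps)
  then show "D1 (smul c x) + D2 (smul c x) - smul c (D1 x + D2 x) \<in> I"
    using assms x unfolding Qop_def by (metis Iadd)
next
  fix p a assume p: "is_qpath V E t h p" and a: "a \<in> E"
  let ?P = "bas p" and ?A = "bas (t a, [a])"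
  have "D1 (pmult h ?P ?A) + D2 (pmult h ?P ?A) - (pmult h (D1 ?P + D2 ?P) ?A + pmult h ?P (D1 ?A + D2 ?A)) =
    (D1 (pmult h ?P ?A) - (pmult h (D1 ?P) ?A + pmult h ?P (D1 ?A))) +
    (D2 (pmult h ?P ?A) - (pmult h (D2 ?P) ?A + pmult h ?P (D2 ?A)))"
    by (simp add: pmult_add1 pmult_add2 algebra_simps)
  then show "D1 (pmult h ?P ?A) + D2 (pmult h ?P ?A) - (pmult h (D1 ?P + D2 ?P) ?A + pmult h ?P (D1 ?A + D2 ?A)) \<in> I"
    using assms p a unfolding Qop_def by (metis Iadd)
qed

lemma Q_neg:
  assumes "Qop D1"
  shows "Qop (\<lambda>x. - D1 x)"
  unfolding Qop_def
proof (intro conjI ballI allI impI)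
  fix x y :: "('v,'e,'k) pelt" assume x: "x \<in> path_alg V E t h" and y: "y \<in> path_alg V E t h"
  have "- D1 (x + y) - (- D1 x + - D1 y) = - (D1 (x + y) - (D1 x + D1 y))" by (simp add: algebra_simps)
  then show "- D1 (x + y) - (- D1 x + - D1 y) \<in> I"
    using assms x y unfolding Qop_def by (metis Ineg)
next
  fix c and x :: "('v,'e,'k) pelt" assume x: "x \<in> path_alg V E t h"
  have "smul c (- D1 x) = - smul c (D1 x)" by (rule ext) simp
  then have "- D1 (smul c x) - smul c (- D1 x) = - (D1 (smul c x) - smul c (D1 x))"
    by (simp add: algebra_simps)
  then show "- D1 (smul c x) - smul c (- D1 x) \<in> I"
    using assms x unfolding Qop_def by (metis Ineg)
next
  fix p a assume p: "is_qpath V E t h p" and a: "a \<in> E"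
  let ?P = "bas p" and ?A = "bas (t a, [a])"
  have n1: "pmult h (- D1 ?P) ?A = - pmult h (D1 ?P) ?A"
    using pmult_diff1[of h 0 "D1 ?P" ?A] by (simp add: pmult_zero1)
  have n2: "pmult h ?P (- D1 ?A) = - pmult h ?P (D1 ?A)"
    using pmult_diff2[of h ?P 0 "D1 ?A"] by (simp add: pmult_zero2)
  have "- D1 (pmult h ?P ?A) - (pmult h (- D1 ?P) ?A + pmult h ?P (- D1 ?A)) =
    - (D1 (pmult h ?P ?A) - (pmult h (D1 ?P) ?A + pmult h ?P (D1 ?A)))"
    by (simp add: n1 n2 algebra_simps)
  then show "- D1 (pmult h ?P ?A) - (pmult h (- D1 ?P) ?A + pmult h ?P (- D1 ?A)) \<in> I"
    using assms p a unfolding Qop_def by (metis Ineg)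
qed

lemma Q_diff:
  assumes "Qop D1" "Qop D2"
  shows "Qop (\<lambda>x. D1 x - D2 x)"
  using Q_add[OF assms(1) Q_neg[OF assms(2)]] by simp

lemma Q_zero: "Qop (\<lambda>x. 0)"
  unfolding Qop_def using I0 by (simp add: pmult_zero1 pmult_zero2)

lemma Q_zero': "Qop (\<lambda>x _. 0)"
  using Q_zero by (simp add: zero_fun_def)

lemma Q_sum:
  assumes "\<And>j. j \<in> J \<Longrightarrow> Qop (D j)"
  shows "Qop (\<lambda>x. \<Sum>j\<in>J. D j x)"
  using assms
proof (induction J rule: infinite_finite_induct)
  case (infinite A) then show ?case using Q_zero Q_zero' by simp
next
  case empty then show ?case using Q_zero Q_zero' by simp
next
  case (insert j F)
  have "Qop (\<lambda>x. D j x + (\<Sum>j\<in>F. D j x))"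
    by (rule Q_add) (use insert in auto)
  moreover have "(\<lambda>x. \<Sum>j\<in>insert j F. D j x) = (\<lambda>x. D j x + (\<Sum>j\<in>F. D j x))"
    using insert(1,2) by (simp only: sum.insert[OF insert(1,2)])
  ultimately show ?case by simp
qed

lemma pa_zero: "(0::('v,'e,'k) pelt) \<in> path_alg V E t h"
  by (simp add: path_alg_def)

lemma pa_smul:
  fixes x :: "('v,'e,'k) pelt"
  assumes x: "x \<in> path_alg V E t h" shows "smul c x \<in> path_alg V E t h"
proof -
  have sub: "{p. smul c x p \<noteq> 0} \<subseteq> {p. x p \<noteq> 0}" by auto
  have "finite {p. x p \<noteq> 0}" "\<forall>p. x p \<noteq> 0 \<longrightarrow> is_qpath V E t h p"
    using x unfolding path_alg_def by blast+
  then have "finite {p. smul c x p \<noteq> 0}" "\<forall>p. smul c x p \<noteq> 0 \<longrightarrow> is_qpath V E t h p"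
    using sub finite_subset by blast+
  then show ?thesis unfolding path_alg_def by blast
qed

lemma unique:
  assumes HV: "\<forall>a\<in>E. t a \<in> V \<and> h a \<in> V" and Q: "Qop D"
    and ga: "\<forall>a\<in>E. D (bas (t a, [a])) \<in> I" and gv: "\<forall>v\<in>V. D (bas (v, [])) \<in> I"
    and x: "x \<in> path_alg V E t h"
  shows "D x \<in> I"
proof -
  have HV': "\<forall>a\<in>E. h a \<in> V" using HV by auto
  have paths: "is_qpath V E t h (v, l) \<Longrightarrow> D (bas (v, l)) \<in> I" for v l
  proof (induction l arbitrary: v rule: rev_induct)
    case Nil
    then show ?case using gv by (simp add: is_qpath_Nil)
  next
    case (snoc a l)
    then have P: "is_qpath V E t h (v, l)" and C: "is_qpath V E t h (pend h (v, l), [a])"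
      by (simp_all only: is_qpath_append[OF HV'])
    from C have a: "a \<in> E" "t a = pend h (v, l)" by (simp_all add: is_qpath_Cons[OF HV'])
    have eq: "bas (v, l @ [a]) = pmult h (bas (v, l)) (bas (t a, [a]))"
      using a by (simp add: pmult_bas mulb_def pcat_def)
    let ?X = "pmult h (D (bas (v, l))) (bas (t a, [a]))"
    let ?Y = "pmult h (bas (v, l)) (D (bas (t a, [a])))"
    have L: "D (pmult h (bas (v, l)) (bas (t a, [a]))) - (?X + ?Y) \<in> I"
      using Q P a unfolding Qop_def by blast
    have X: "?X \<in> I" by (rule Imul2[OF bas_pa[OF arrow_valid[OF HV a(1)]] snoc(1)[OF P]])
    have Y: "?Y \<in> I" by (rule Imul1[OF bas_pa[OF P]]) (use ga a in auto)
    have "D (bas (v, l @ [a])) = (D (pmult h (bas (v, l)) (bas (t a, [a]))) - (?X + ?Y)) + (?X + ?Y)"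
      unfolding eq by simp
    then show ?case using Iadd[OF L Iadd[OF X Y]] by simp
  qed
  have main: "\<forall>x. x \<in> path_alg V E t h \<longrightarrow> supp x = F \<longrightarrow> D x \<in> I" if "finite F" for F
    using that
  proof (induction F rule: finite_induct)
    case empty
    show ?case
    proof (intro allI impI)
      fix x :: "('v,'e,'k) pelt" assume "x \<in> path_alg V E t h" "supp x = {}"
      then have x0: "x = 0" by (auto simp: supp_def)
      have "D (0 + 0) - (D 0 + D 0) \<in> I" using Q pa_zero unfolding Qop_def by blast
      then have "- D 0 \<in> I" by simp
      then have "- (- D 0) \<in> I" by (rule Ineg)
      then show "D x \<in> I" using x0 by simp
    qed
  next
    case (insert w F)
    show ?case
    proof (intro allI impI)
      fix x :: "('v,'e,'k) pelt" assume x: "x \<in> path_alg V E t h" and sx: "supp x = insert w F"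
      define x' where "x' = x(w := 0)"
      define c where "c = x w"
      have sx': "supp x' = F" using sx insert(2) by (auto simp: supp_def x'_def)
      have x'pa: "x' \<in> path_alg V E t h"
        using x pa_fin[OF x] by (auto simp: path_alg_def x'_def intro: finite_subset)
      have "x w \<noteq> 0" using sx by (auto simp: supp_def)
      then have wv: "is_qpath V E t h w" using x unfolding path_alg_def by blast
      have bpa: "bas w \<in> path_alg V E t h" by (rule bas_pa[OF wv])
      have smpa: "smul c (bas w) \<in> path_alg V E t h"
        by (rule pa_smul[OF bpa])
      have xe: "x = x' + smul c (bas w)"
        by (rule ext) (simp add: x'_def c_def bas_apply)
      have 1: "D (x' + smul c (bas w)) - (D x' + D (smul c (bas w))) \<in> I"
        using Q x'pa smpa unfolding Qop_def by blast
      have 2: "D x' \<in> I" using insert(3) x'pa sx' by blast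
      have 3: "D (smul c (bas w)) - smul c (D (bas w)) \<in> I"
        using Q bpa unfolding Qop_def by blast
      have 4: "smul c (D (bas w)) \<in> I"
        using paths[of "fst w" "snd w"] wv by (intro Ismul) simp
      have "D x = (D (x' + smul c (bas w)) - (D x' + D (smul c (bas w)))) + (D x' + ((D (smul c (bas w)) - smul c (D (bas w))) + smul c (D (bas w))))"
        using xe by simp
      then show "D x \<in> I" using Iadd[OF 1 Iadd[OF 2 Iadd[OF 3 4]]] by simp
    qed
  qed
  show ?thesis using main[OF pa_fin[OF x]] x by blast
qed

end

lemma pend_pcat: "pend h p1 = fst p2 \<Longrightarrow> pend h (pcat p1 p2) = pend h p2"
  by (auto simp: pend_def pcat_def)

lemma bas_assoc:
  "pmult h (pmult h (bas p1) (bas p2)) (bas p3) = pmult h (bas p1) (pmult h (bas p2) (bas p3))"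
proof -
  have f: "fst (pcat p2 p3) = fst p2" by (simp add: pcat_def)
  have a: "pcat (pcat p1 p2) p3 = pcat p1 (pcat p2 p3)" by (simp add: pcat_def)
  show ?thesis
  proof (cases "pend h p1 = fst p2")
    case True
    then have pp: "pend h (pcat p1 p2) = pend h p2" by (rule pend_pcat)
    show ?thesis using True by (simp add: pmult_bas mulb_def pmult_zero1 pmult_zero2 pp f a)
  next
    case False
    then show ?thesis by (simp add: pmult_bas mulb_def pmult_zero1 pmult_zero2 f)
  qed
qed

lemma Dm_eq: "Dm h m x = pmult h m x - pmult h x m"
  by (simp add: Dm_def fun_diff_def)


lemma Dm_Q:
  fixes I :: "('v,'e,'k::comm_ring_1) pelt set"
  assumes I: "is_ideal V E t h I"
  shows "Qop V E t h I (Dm h (bas q))"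
  unfolding Qop_def[OF I]
proof (intro conjI ballI allI impI)
  fix x y :: "('v,'e,'k) pelt"
  have "Dm h (bas q) (x + y) - (Dm h (bas q) x + Dm h (bas q) y) = 0"
    by (simp add: Dm_eq pmult_add1 pmult_add2 algebra_simps)
  then show "Dm h (bas q) (x + y) - (Dm h (bas q) x + Dm h (bas q) y) \<in> I" using I0[OF I] by simp
next
  fix c and x :: "('v,'e,'k) pelt"
  have "Dm h (bas q) (smul c x) - smul c (Dm h (bas q) x) = 0"
    by (simp add: Dm_eq pmult_smul1 pmult_smul2 smul_diff)
  then show "Dm h (bas q) (smul c x) - smul c (Dm h (bas q) x) \<in> I" using I0[OF I] by simp
next
  fix p a
  let ?M = "bas q :: ('v,'e,'k) pelt" and ?P = "bas p :: ('v,'e,'k) pelt" and ?A = "bas (t a, [a]) :: ('v,'e,'k) pelt"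
  have "Dm h ?M (pmult h ?P ?A) - (pmult h (Dm h ?M ?P) ?A + pmult h ?P (Dm h ?M ?A)) = 0"
    by (simp add: Dm_eq pmult_diff1 pmult_diff2 bas_assoc)
  then show "Dm h ?M (pmult h ?P ?A) - (pmult h (Dm h ?M ?P) ?A + pmult h ?P (Dm h ?M ?A)) \<in> I"
    using I0[OF I] by simp
qed


lemma congI_zero: "congI I u (\<lambda>_. 0) \<longleftrightarrow> u \<in> I"
  by (simp add: congI_def)

lemma gen_sum:
  fixes I :: "('v,'e,'k::comm_ring_1) pelt set" and D :: "'a \<Rightarrow> ('v,'e,'k) pelt \<Rightarrow> ('v,'e,'k) pelt"
  assumes I: "is_ideal V E t h I" and A: "finite A"
    and c1: "b \<in> A \<Longrightarrow> congI I (D b B) (f b)"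
    and c2: "\<And>a. a \<in> A \<Longrightarrow> a \<noteq> b \<Longrightarrow> congI I (D a B) (\<lambda>_. 0)"
  shows "(\<Sum>a\<in>A. D a B) - (if b \<in> A then f b else 0) \<in> I"
proof -
  have "(\<Sum>a\<in>A. D a B - (if b = a then f a else 0)) \<in> I"
  proof (rule Isum[OF I])
    fix a assume a: "a \<in> A"
    show "D a B - (if b = a then f a else 0) \<in> I"
    proof (cases "b = a")
      case True
      then show ?thesis using c1 a congI_iff[OF I] by simp
    next
      case False
      then show ?thesis using c2[OF a] congI_zero[of I] by (simp add: eq_commute)
    qed
  qed
  moreover have "(\<Sum>a\<in>A. D a B - (if b = a then f a else 0)) = (\<Sum>a\<in>A. D a B) - (if b \<in> A then f b else 0)"
    using A by (simp add: sum_subtractf sum.delta)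
  ultimately show ?thesis by simp
qed


theorem proposition3p1:
  fixes V :: "'v set" and E :: "'e set" and t h :: "'e \<Rightarrow> 'v"
    and I :: "('v, 'e, 'k::field) pelt set" and q :: "('v, 'e) qpath" and v0 :: 'v
  assumes "finite V" and "finite E"
    and "\<forall>a\<in>E. t a \<in> V \<and> h a \<in> V"
    and "quiver_connected V E t h"
    and "is_ideal V E t h I"
    and "I \<subseteq> arrow_ideal_sq V E t h"
    and "is_qpath V E t h q" and "fst q = v0" and "pend h q = v0"
  shows "\<forall>x\<in>path_alg V E t h.
    congI I (Dm h (bas q) x)
      (\<lambda>p. (\<Sum>a\<in>{a\<in>E. t a = v0}. Drs V E t h I a (pcat q (t a, [a])) x p)
         - (\<Sum>r\<in>{r\<in>E. h r = v0}. Drs V E t h I r (pcat (t r, [r]) q) x p))"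
proof -
  have HV: "\<forall>a\<in>E. t a \<in> V \<and> h a \<in> V" by (rule assms(3))
  have HV': "\<forall>a\<in>E. h a \<in> V" using HV by auto
  have I: "is_ideal V E t h I" by (rule assms(5))
  obtain qv where q: "q = (v0, qv)" using assms(8) by (cases q) auto
  have qval: "is_qpath V E t h (v0, qv)" using assms(7) q by simp
  have v0V: "v0 \<in> V" using qval by (simp add: is_qpath_def)
  have pq: "pend h (v0, qv) = v0" using assms(9) q by simp
  let ?A1 = "{a\<in>E. t a = v0}" and ?A2 = "{r\<in>E. h r = v0}"
  have fA1: "finite ?A1" and fA2: "finite ?A2" using assms(2) by auto
  define D1 where "D1 a = Drs V E t h I a (pcat q (t a, [a]))" for a
  define D2 where "D2 r = Drs V E t h I r (pcat (t r, [r]) q)" for r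
  have s1: "is_qpath V E t h (pcat q (t a, [a])) \<and> fst (pcat q (t a, [a])) = t a \<and>
      pend h (pcat q (t a, [a])) = h a \<and> snd (pcat q (t a, [a])) \<noteq> []" if a: "a \<in> ?A1" for a
  proof -
    have "is_qpath V E t h (v0, [a])" using a v0V by (simp add: is_qpath_def)
    then have "is_qpath V E t h (v0, qv @ [a])" using qval pq by (simp add: is_qpath_append[OF HV'])
    then show ?thesis using a q by (simp add: pcat_def pend_def)
  qed
  have s2: "is_qpath V E t h (pcat (t r, [r]) q) \<and> fst (pcat (t r, [r]) q) = t r \<and>
      pend h (pcat (t r, [r]) q) = h r \<and> snd (pcat (t r, [r]) q) \<noteq> []" if r: "r \<in> ?A2" for r
  proof -
    have "is_qpath V E t h (t r, r # qv)" using r qval HV by (simp add: is_qpath_Cons[OF HV'])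
    moreover have "pend h (t r, r # qv) = h r" using r pq by (auto simp: pend_def)
    ultimately show ?thesis using q by (simp add: pcat_def)
  qed
  have sp1: "is_diffop V E t h I (D1 a) \<and> congI I (D1 a (bas (t a, [a]))) (bas (pcat q (t a, [a]))) \<and>
      (\<forall>b\<in>E. b \<noteq> a \<longrightarrow> congI I (D1 a (bas (t b, [b]))) (\<lambda>_. 0)) \<and>
      (\<forall>v\<in>V. congI I (D1 a (bas (v, []))) (\<lambda>_. 0))" if "a \<in> ?A1" for a
    unfolding D1_def using s1[OF that] by (intro Drs_spec[OF HV' I]) auto
  have sp2: "is_diffop V E t h I (D2 a) \<and> congI I (D2 a (bas (t a, [a]))) (bas (pcat (t a, [a]) q)) \<and>
      (\<forall>b\<in>E. b \<noteq> a \<longrightarrow> congI I (D2 a (bas (t b, [b]))) (\<lambda>_. 0)) \<and>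
      (\<forall>v\<in>V. congI I (D2 a (bas (v, []))) (\<lambda>_. 0))" if "a \<in> ?A2" for a
    unfolding D2_def using s2[OF that] by (intro Drs_spec[OF HV' I]) auto
  define S1 where "S1 x = (\<Sum>a\<in>?A1. D1 a x)" for x
  define S2 where "S2 x = (\<Sum>a\<in>?A2. D2 a x)" for x
  define Del where "Del x = Dm h (bas q) x - (S1 x - S2 x)" for x
  have Q1: "Qop V E t h I S1" unfolding S1_def
    by (rule Q_sum[OF I]) (use sp1 diffop_Q[OF I HV] in blast)
  have Q2: "Qop V E t h I S2" unfolding S2_def
    by (rule Q_sum[OF I]) (use sp2 diffop_Q[OF I HV] in blast)
  have QD: "Qop V E t h I Del"
    using Q_diff[OF I Dm_Q[OF I, of q] Q_diff[OF I Q1 Q2]] unfolding Del_def by simp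
  have ga: "Del (bas (t b, [b])) \<in> I" if b: "b \<in> E" for b
  proof -
    let ?B = "bas (t b, [b]) :: ('v,'e,'k) pelt"
    let ?Y1 = "if b \<in> ?A1 then bas (pcat q (t b, [b])) else (0::('v,'e,'k) pelt)"
    let ?Y2 = "if b \<in> ?A2 then bas (pcat (t b, [b]) q) else (0::('v,'e,'k) pelt)"
    have X1: "S1 ?B - ?Y1 \<in> I" unfolding S1_def
      by (rule gen_sum[OF I fA1]) (use sp1 b in auto)
    have X2: "S2 ?B - ?Y2 \<in> I" unfolding S2_def
      by (rule gen_sum[OF I fA2]) (use sp2 b in auto)
    have m1: "mulb h q (t b, [b]) = ?Y1" using b assms(9) by (auto simp: mulb_def)
    have m2: "mulb h (t b, [b]) q = ?Y2" using b assms(8) by (auto simp: mulb_def pend_def)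
    have dm: "Dm h (bas q) ?B = ?Y1 - ?Y2"
      by (simp only: Dm_eq pmult_bas m1 m2)
    have "Del ?B = - (S1 ?B - ?Y1) + (S2 ?B - ?Y2)"
      unfolding Del_def dm by (simp add: algebra_simps)
    then show ?thesis using Iadd[OF I Ineg[OF I X1] X2] by simp
  qed
  have gv: "Del (bas (v, [])) \<in> I" if v: "v \<in> V" for v
  proof -
    let ?B = "bas (v, []) :: ('v,'e,'k) pelt"
    have X1: "S1 ?B \<in> I" unfolding S1_def
      by (rule Isum[OF I]) (use sp1 v congI_zero in blast)
    have X2: "S2 ?B \<in> I" unfolding S2_def
      by (rule Isum[OF I]) (use sp2 v congI_zero in blast)
    have dm: "Dm h (bas q) ?B = 0"
      using q pq by (simp add: Dm_eq pmult_bas mulb_def pcat_def pend_def)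
    have "Del ?B = - (S1 ?B - S2 ?B)"
      unfolding Del_def dm by simp
    then show ?thesis using Ineg[OF I Idiff[OF I X1 X2]] by simp
  qed
  show ?thesis
  proof
    fix x :: "('v,'e,'k) pelt" assume x: "x \<in> path_alg V E t h"
    have "Del x \<in> I" by (rule unique[OF I HV QD _ _ x]) (use ga gv in auto)
    moreover have "(\<lambda>p. Dm h (bas q) x p - ((\<Sum>a\<in>?A1. Drs V E t h I a (pcat q (t a, [a])) x p)
         - (\<Sum>r\<in>?A2. Drs V E t h I r (pcat (t r, [r]) q) x p))) = Del x"
      by (rule ext) (simp add: Del_def S1_def S2_def D1_def D2_def sum_fun_apply)
    ultimately show "congI I (Dm h (bas q) x)
      (\<lambda>p. (\<Sum>a\<in>?A1. Drs V E t h I a (pcat q (t a, [a])) x p)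
         - (\<Sum>r\<in>?A2. Drs V E t h I r (pcat (t r, [r]) q) x p))"
      by (simp add: congI_def)
  qed
qed

end
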